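(* Let $X,Y$ be Banach spaces and let $-A$ be the generator of a bounded strongly continuous semigroup $(T(t))_{t\ge0}$ on $X$; assume $A$ is injective and has dense range. Let $C:\mathcal D(A)\to Y$ be bounded (for the graph norm) and infinite-time admissible for $A$, i.e. $\sup_{x\in\mathcal D(A),\|x\|=1}\int_0^\infty\|CT(t)x\|_Y^2\,dt<\infty$. Suppose there exist $\beta\in(0,1)$ and $K,\delta>0$ such that $\|x\|^2\le K^2\int_0^\infty\|(tA)^{-\beta}(T(2t^{2\beta})-T(t^{2\beta}))x\|^2\,\frac{dt}{t}$ for all $x\in X$ and $\|CA^{-(1-\beta)}x\|_Y\ge\delta\|x\|$ for all $x\in\mathcal D(A)\cap\mathcal R(A)$ (understood as $\|CA^{-1}x\|_Y\ge\delta\|A^{-\beta}x\|$). Then $C$ is exactly observable for $A$ in infinite time: there is $m>0$ with $m^2\|x\|^2\le\int_0^\infty\|CT(t)x\|_Y^2\,dt$ for all $x\in\mathcal D(A)$.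
   Context: $\mathcal D(A)$, $\mathcal R(A)$ denote domain and range of $A$. $A^{-\gamma}$ denotes the inverse of the fractional power $A^\gamma$ of the injective sectorial operator $A$, and $(tA)^{-\beta}=t^{-\beta}A^{-\beta}$. *)

theory Defs
  imports "HOL-Analysis.Analysis"
begin

definition C0_semigroup :: "(real \<Rightarrow> 'a::banach \<Rightarrow>\<^sub>L 'a) \<Rightarrow> bool" where
  "C0_semigroup T \<longleftrightarrow> T 0 = id_blinfun
     \<and> (\<forall>s\<ge>0. \<forall>t\<ge>0. T (s + t) = T s o\<^sub>L T t)
     \<and> (\<forall>x. continuous_on {0..} (\<lambda>t. blinfun_apply (T t) x))"

definition bounded_semigroup :: "(real \<Rightarrow> 'a::banach \<Rightarrow>\<^sub>L 'a) \<Rightarrow> bool" where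
  "bounded_semigroup T \<longleftrightarrow> (\<exists>M. \<forall>t\<ge>0. norm (T t) \<le> M)"

text \<open>The operator A such that -A is the generator of T: domain and action.\<close>
definition ngen_dom :: "(real \<Rightarrow> 'a::banach \<Rightarrow>\<^sub>L 'a) \<Rightarrow> 'a set" where
  "ngen_dom T = {x. \<exists>y. ((\<lambda>h. (1 / h) *\<^sub>R (x - blinfun_apply (T h) x)) \<longlongrightarrow> y) (at_right 0)}"

definition ngen :: "(real \<Rightarrow> 'a::banach \<Rightarrow>\<^sub>L 'a) \<Rightarrow> 'a \<Rightarrow> 'a" where
  "ngen T x = Lim (at_right 0) (\<lambda>h. (1 / h) *\<^sub>R (x - blinfun_apply (T h) x))"

definition ngen_inv :: "(real \<Rightarrow> 'a::banach \<Rightarrow>\<^sub>L 'a) \<Rightarrow> 'a \<Rightarrow> 'a" where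
  "ngen_inv T x = (THE y. y \<in> ngen_dom T \<and> ngen T y = x)"

definition resolv :: "(real \<Rightarrow> 'a::banach \<Rightarrow>\<^sub>L 'a) \<Rightarrow> real \<Rightarrow> 'a \<Rightarrow> 'a" where
  "resolv T l y = (THE x. x \<in> ngen_dom T \<and> l *\<^sub>R x + ngen T x = y)"

definition balakrishnan :: "(real \<Rightarrow> 'a::banach \<Rightarrow>\<^sub>L 'a) \<Rightarrow> real \<Rightarrow> 'a \<Rightarrow> 'a" where
  "balakrishnan T \<alpha> x = (sin (pi * \<alpha>) / pi) *\<^sub>R
     integral {0<..} (\<lambda>l. (l powr (\<alpha> - 1)) *\<^sub>R ngen T (resolv T l x))"

text \<open>Graph of the fractional power A^alpha (0 < alpha < 1): the closure of the
  Balakrishnan operator defined on D(A).\<close>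
definition frac_pow_graph :: "(real \<Rightarrow> 'a::banach \<Rightarrow>\<^sub>L 'a) \<Rightarrow> real \<Rightarrow> ('a \<times> 'a) set" where
  "frac_pow_graph T \<alpha> = closure {(x, balakrishnan T \<alpha> x) | x. x \<in> ngen_dom T}"

definition frac_neg_pow :: "(real \<Rightarrow> 'a::banach \<Rightarrow>\<^sub>L 'a) \<Rightarrow> real \<Rightarrow> 'a \<Rightarrow> 'a" where
  "frac_neg_pow T \<alpha> u = (THE v. (v, u) \<in> frac_pow_graph T \<alpha>)"

end

theory Submission
  imports Defs
begin

definition gen :: "(real \<Rightarrow> 'a::banach \<Rightarrow>\<^sub>L 'a) \<Rightarrow> 'a \<Rightarrow> 'a \<Rightarrow> bool" where
  "gen T x u \<longleftrightarrow> ((\<lambda>h. (1 / h) *\<^sub>R (x - blinfun_apply (T h) x)) \<longlongrightarrow> u) (at_right 0)"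

lemma gen_ngen: "gen T x u \<Longrightarrow> x \<in> ngen_dom T \<and> ngen T x = u"
  unfolding gen_def ngen_dom_def ngen_def
  by (auto intro: tendsto_Lim)

lemma dom_gen: "x \<in> ngen_dom T \<Longrightarrow> gen T x (ngen T x)"
proof -
  assume "x \<in> ngen_dom T"
  then obtain y where y: "((\<lambda>h. (1 / h) *\<^sub>R (x - blinfun_apply (T h) x)) \<longlongrightarrow> y) (at_right 0)"
    unfolding ngen_dom_def by blast
  have "ngen T x = y" unfolding ngen_def using tendsto_Lim[OF _ y] by simp
  then show ?thesis using y unfolding gen_def by simp
qed

lemma gen_add: "gen T x u \<Longrightarrow> gen T y v \<Longrightarrow> gen T (x + y) (u + v)"
  unfolding gen_def
  by (drule (1) tendsto_add) (simp add: algebra_simps blinfun.add_right)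

lemma gen_scale: "gen T x u \<Longrightarrow> gen T (c *\<^sub>R x) (c *\<^sub>R u)"
  unfolding gen_def
  by (drule tendsto_scaleR[OF tendsto_const[of c]]) (simp add: algebra_simps blinfun.scaleR_right)

lemma gen_diff: "gen T x u \<Longrightarrow> gen T y v \<Longrightarrow> gen T (x - y) (u - v)"
  using gen_add[of T x u "(-1) *\<^sub>R y" "(-1) *\<^sub>R v"] gen_scale[of T y v "-1"] by simp

lemma gen_zero: "gen T 0 0"
  unfolding gen_def by simp

lemma gen_sum: "finite I \<Longrightarrow> (\<And>i. i \<in> I \<Longrightarrow> gen T (w i) (v i)) \<Longrightarrow> gen T (\<Sum>i\<in>I. w i) (\<Sum>i\<in>I. v i)"
  by (induction I rule: finite_induct) (auto intro: gen_add gen_zero)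

lemma sg_comp: "C0_semigroup T \<Longrightarrow> s \<ge> 0 \<Longrightarrow> t \<ge> 0 \<Longrightarrow> blinfun_apply (T s) (blinfun_apply (T t) x) = blinfun_apply (T (s + t)) x"
  unfolding C0_semigroup_def by simp

lemma sg_cont: "C0_semigroup T \<Longrightarrow> continuous_on {0..} (\<lambda>t. blinfun_apply (T t) x)"
  unfolding C0_semigroup_def by simp

lemma gen_T:
  assumes sg: "C0_semigroup T" and g: "gen T x u" and r: "r \<ge> 0"
  shows "gen T (blinfun_apply (T r) x) (blinfun_apply (T r) u)"
proof -
  have lim: "((\<lambda>h. blinfun_apply (T r) ((1 / h) *\<^sub>R (x - blinfun_apply (T h) x))) \<longlongrightarrow> blinfun_apply (T r) u) (at_right 0)"
    using g unfolding gen_def by (intro blinfun.tendsto tendsto_const)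
  have ev: "\<forall>\<^sub>F h in at_right 0. blinfun_apply (T r) ((1 / h) *\<^sub>R (x - blinfun_apply (T h) x)) =
      (1 / h) *\<^sub>R (blinfun_apply (T r) x - blinfun_apply (T h) (blinfun_apply (T r) x))"
  proof (rule eventually_mono[OF eventually_at_right_less])
    fix h :: real assume "0 < h"
    then show "blinfun_apply (T r) ((1 / h) *\<^sub>R (x - blinfun_apply (T h) x)) =
      (1 / h) *\<^sub>R (blinfun_apply (T r) x - blinfun_apply (T h) (blinfun_apply (T r) x))"
    proof -
      have "blinfun_apply (T r) (blinfun_apply (T h) x) = blinfun_apply (T h) (blinfun_apply (T r) x)"
        using sg_comp[OF sg, of r h x] sg_comp[OF sg, of h r x] r \<open>0 < h\<close> by (simp add: add.commute)
      then show ?thesis by (simp add: blinfun.scaleR_right blinfun.diff_right)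
    qed
  qed
  show ?thesis unfolding gen_def using Lim_transform_eventually[OF lim ev] .
qed

lemma avg_lim:
  fixes g :: "real \<Rightarrow> 'a::banach"
  assumes cg: "continuous_on {c..c+1} g"
  shows "((\<lambda>h. (1/h) *\<^sub>R integral {c..c+h} g) \<longlongrightarrow> g c) (at_right 0)"
proof (rule tendstoI)
  fix e :: real assume e: "e > 0"
  obtain d where d: "d > 0" "\<And>x'. x' \<in> {c..c+1} \<Longrightarrow> dist x' c < d \<Longrightarrow> dist (g x') (g c) < e/2"
    using cg e unfolding continuous_on_iff by (metis atLeastAtMost_iff half_gt_zero le_add_same_cancel1 order_refl zero_le_one)
  show "\<forall>\<^sub>F h in at_right 0. dist ((1/h) *\<^sub>R integral {c..c+h} g) (g c) < e"
    unfolding eventually_at_right_field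
  proof (intro exI[of _ "min d 1"] conjI allI impI)
    show "0 < min d 1" using d by simp
    fix h :: real assume h: "0 < h" "h < min d 1"
    have cgh: "continuous_on {c..c+h} g" using h by (intro continuous_on_subset[OF cg]) auto
    have int: "g integrable_on {c..c+h}" using cgh by (rule integrable_continuous_real)
    have eq: "integral {c..c+h} g - h *\<^sub>R g c = integral {c..c+h} (\<lambda>r. g r - g c)"
      using int h by (subst integral_diff) auto
    have "norm (integral {c..c+h} (\<lambda>r. g r - g c)) \<le> integral {c..c+h} (\<lambda>r. e/2)"
    proof (rule integral_norm_bound_integral)
      show "(\<lambda>r. g r - g c) integrable_on {c..c+h}" using int by (intro integrable_diff) auto
      show "(\<lambda>r. e/2) integrable_on {c..c+h}" by (rule integrable_const_ivl)
      fix r assume "r \<in> {c..c+h}"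
      then show "norm (g r - g c) \<le> e/2" using d(2)[of r] h by (auto simp: dist_norm)
    qed
    also have "\<dots> = h * (e/2)" using h by simp
    finally have b: "norm (integral {c..c+h} g - h *\<^sub>R g c) \<le> h * (e/2)" using eq by simp
    have "(1/h) *\<^sub>R integral {c..c+h} g - g c = (1/h) *\<^sub>R (integral {c..c+h} g - h *\<^sub>R g c)"
      using h by (simp add: algebra_simps)
    then have "dist ((1/h) *\<^sub>R integral {c..c+h} g) (g c) = (1/h) * norm (integral {c..c+h} g - h *\<^sub>R g c)"
      using h by (simp add: dist_norm)
    also have "\<dots> \<le> (1/h) * (h * (e/2))" using b h by (intro mult_left_mono) auto
    also have "\<dots> < e" using h e by simp
    finally show "dist ((1/h) *\<^sub>R integral {c..c+h} g) (g c) < e" .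
  qed
qed

lemma sg_int:
  assumes sg: "C0_semigroup T" and "0 \<le> a"
  shows "(\<lambda>r. blinfun_apply (T r) v) integrable_on {a..b}"
  by (rule integrable_continuous_real, rule continuous_on_subset[OF sg_cont[OF sg]]) (use assms in auto)

lemma gen_integral:
  assumes sg: "C0_semigroup T" and ab: "0 \<le> a" "a \<le> b"
  shows "gen T (integral {a..b} (\<lambda>r. blinfun_apply (T r) v)) (blinfun_apply (T a) v - blinfun_apply (T b) v)"
proof -
  define g where "g = (\<lambda>r. blinfun_apply (T r) v)"
  define G where "G = (\<lambda>u. integral {0..u} g)"
  have gi: "\<And>a b. 0 \<le> a \<Longrightarrow> g integrable_on {a..b}" unfolding g_def using sg_int[OF sg] by blast
  have Gc: "\<And>c d. 0 \<le> c \<Longrightarrow> c \<le> d \<Longrightarrow> integral {c..d} g = G d - G c"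
  proof -
    fix c d :: real assume "0 \<le> c" "c \<le> d"
    then show "integral {c..d} g = G d - G c"
      unfolding G_def using Henstock_Kurzweil_Integration.integral_combine[of 0 c d g] gi[of 0 d]
      by (simp add: algebra_simps)
  qed
  have cg: "\<And>c. 0 \<le> c \<Longrightarrow> continuous_on {c..c+1} g"
    unfolding g_def by (rule continuous_on_subset[OF sg_cont[OF sg]]) auto
  have lim: "((\<lambda>h. (1/h) *\<^sub>R integral {a..a+h} g - (1/h) *\<^sub>R integral {b..b+h} g) \<longlongrightarrow> g a - g b) (at_right 0)"
    by (intro tendsto_diff avg_lim cg) (use ab in auto)
  have ev: "\<forall>\<^sub>F h in at_right 0. (1/h) *\<^sub>R integral {a..a+h} g - (1/h) *\<^sub>R integral {b..b+h} g =
      (1 / h) *\<^sub>R (integral {a..b} g - blinfun_apply (T h) (integral {a..b} g))"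
  proof (rule eventually_mono[OF eventually_at_right_less])
    fix h :: real assume h: "0 < h"
    have "blinfun_apply (T h) (integral {a..b} g) = integral {a..b} (blinfun_apply (T h) \<circ> g)"
      by (rule integral_linear[symmetric, OF gi[OF ab(1)]]) (rule blinfun.bounded_linear_right)
    also have "\<dots> = integral {a..b} (g \<circ> (+) h)"
      by (rule integral_cong) (use ab h in \<open>auto simp: g_def sg_comp[OF sg]\<close>)
    also have "\<dots> = integral {a+h..b+h} g"
      by (simp add: integral_shift_Icc_real add.commute)
    finally have E1: "blinfun_apply (T h) (integral {a..b} g) = G (b+h) - G (a+h)"
      using Gc[of "a+h" "b+h"] ab h by simp
    have E2: "integral {a..b} g = G b - G a" using Gc ab by simp
    have E3: "integral {a..a+h} g = G (a+h) - G a" using Gc ab h by simp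
    have E4: "integral {b..b+h} g = G (b+h) - G b" using Gc ab h by simp
    show "(1/h) *\<^sub>R integral {a..a+h} g - (1/h) *\<^sub>R integral {b..b+h} g =
      (1 / h) *\<^sub>R (integral {a..b} g - blinfun_apply (T h) (integral {a..b} g))"
      unfolding E1 by (unfold E2 E3 E4) (simp add: algebra_simps)
  qed
  show ?thesis unfolding gen_def using Lim_transform_eventually[OF lim ev] by (simp add: g_def)
qed

lemma int_gen:
  assumes sg: "C0_semigroup T" and bdd: "bounded_semigroup T" and g: "gen T x u" and ab: "0 \<le> a" "a \<le> b"
  shows "integral {a..b} (\<lambda>r. blinfun_apply (T r) u) = blinfun_apply (T a) x - blinfun_apply (T b) x"
proof -
  obtain M where M: "\<And>t. t \<ge> 0 \<Longrightarrow> norm (T t) \<le> M" using bdd unfolding bounded_semigroup_def by blast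
  have M0: "M \<ge> 0" using M[of 0] norm_ge_zero[of "T 0"] by linarith
  define q where "q = (\<lambda>h. (1 / h) *\<^sub>R (x - blinfun_apply (T h) x))"
  define z where "z = integral {a..b} (\<lambda>r. blinfun_apply (T r) x)"
  define F where "F = (\<lambda>h. integral {a..b} (\<lambda>r. blinfun_apply (T r) (q h)))"
  have qlim: "(q \<longlongrightarrow> u) (at_right 0)" using g unfolding gen_def q_def .
  have ix: "\<And>w. (\<lambda>r. blinfun_apply (T r) w) integrable_on {a..b}" using sg_int[OF sg ab(1)] .
  have lim1: "((\<lambda>h. (1 / h) *\<^sub>R (z - blinfun_apply (T h) z)) \<longlongrightarrow> blinfun_apply (T a) x - blinfun_apply (T b) x) (at_right 0)"
    using gen_integral[OF sg ab, of x] unfolding gen_def z_def .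
  have ev: "\<forall>\<^sub>F h in at_right 0. (1 / h) *\<^sub>R (z - blinfun_apply (T h) z) = F h"
  proof (rule eventually_mono[OF eventually_at_right_less])
    fix h :: real assume h: "0 < h"
    have Tz: "blinfun_apply (T h) z = integral {a..b} (blinfun_apply (T h) \<circ> (\<lambda>r. blinfun_apply (T r) x))"
      unfolding z_def by (rule integral_linear[symmetric, OF ix]) (rule blinfun.bounded_linear_right)
    have c: "\<And>r. r \<in> {a..b} \<Longrightarrow> blinfun_apply (T r) (q h) =
        (1/h) *\<^sub>R (blinfun_apply (T r) x - (blinfun_apply (T h) \<circ> (\<lambda>r. blinfun_apply (T r) x)) r)"
    proof -
      fix r assume r: "r \<in> {a..b}"
      have "blinfun_apply (T r) (blinfun_apply (T h) x) = blinfun_apply (T h) (blinfun_apply (T r) x)"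
        using sg_comp[OF sg, of r h x] sg_comp[OF sg, of h r x] r ab h by (simp add: add.commute)
      then show "blinfun_apply (T r) (q h) =
        (1/h) *\<^sub>R (blinfun_apply (T r) x - (blinfun_apply (T h) \<circ> (\<lambda>r. blinfun_apply (T r) x)) r)"
        unfolding q_def by (simp add: blinfun.scaleR_right blinfun.diff_right)
    qed
    have "F h = integral {a..b} (\<lambda>r. (1/h) *\<^sub>R (blinfun_apply (T r) x - (blinfun_apply (T h) \<circ> (\<lambda>r. blinfun_apply (T r) x)) r))"
      unfolding F_def by (rule integral_cong) (rule c)
    also have "\<dots> = (1/h) *\<^sub>R (z - blinfun_apply (T h) z)"
    proof -
      have "integral {a..b} (\<lambda>r. blinfun_apply (T r) x - (blinfun_apply (T h) \<circ> (\<lambda>r. blinfun_apply (T r) x)) r)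
         = z - integral {a..b} (blinfun_apply (T h) \<circ> (\<lambda>r. blinfun_apply (T r) x))"
        unfolding z_def by (rule integral_diff[OF ix integrable_linear[OF ix blinfun.bounded_linear_right]])
      then show ?thesis unfolding integral_cmul Tz by simp
    qed
    finally show "(1 / h) *\<^sub>R (z - blinfun_apply (T h) z) = F h" by simp
  qed
  have lim2: "(F \<longlongrightarrow> integral {a..b} (\<lambda>r. blinfun_apply (T r) u)) (at_right 0)"
  proof (rule LIM_zero_cancel, rule Lim_null_comparison)
    show "\<forall>\<^sub>F h in at_right 0. norm (F h - integral {a..b} (\<lambda>r. blinfun_apply (T r) u)) \<le> (b - a) * M * norm (q h - u)"
    proof (rule always_eventually, rule allI)
      fix h
      have "F h - integral {a..b} (\<lambda>r. blinfun_apply (T r) u) = integral {a..b} (\<lambda>r. blinfun_apply (T r) (q h - u))"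
        unfolding F_def by (subst integral_diff[symmetric]) (auto intro: ix simp: blinfun.diff_right)
      also have "norm \<dots> \<le> integral {a..b} (\<lambda>r. M * norm (q h - u))"
      proof (rule integral_norm_bound_integral)
        show "(\<lambda>r. blinfun_apply (T r) (q h - u)) integrable_on {a..b}" by (rule ix)
        show "(\<lambda>r. M * norm (q h - u)) integrable_on {a..b}" by (rule integrable_const_ivl)
        fix r assume "r \<in> {a..b}"
        then have "norm (T r) \<le> M" using M ab by auto
        then show "norm (blinfun_apply (T r) (q h - u)) \<le> M * norm (q h - u)"
          by (meson norm_blinfun mult_right_mono norm_ge_zero order_trans)
      qed
      also have "\<dots> = (b - a) * M * norm (q h - u)" using ab by simp
      finally show "norm (F h - integral {a..b} (\<lambda>r. blinfun_apply (T r) u)) \<le> (b - a) * M * norm (q h - u)" .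
    qed
    have "((\<lambda>h. (b - a) * M * norm (q h - u)) \<longlongrightarrow> (b - a) * M * norm (u - u)) (at_right 0)"
      by (intro tendsto_intros qlim)
    then show "((\<lambda>h. (b - a) * M * norm (q h - u)) \<longlongrightarrow> 0) (at_right 0)" by simp
  qed
  show ?thesis using tendsto_unique[OF _ Lim_transform_eventually[OF lim1 ev] lim2] by simp
qed

lemma int_split:
  fixes g :: "real \<Rightarrow> 'a::banach"
  assumes cg: "continuous_on {a..b} g" and h: "0 \<le> h"
  shows "a + real n * h \<le> b \<Longrightarrow> integral {a..a + real n * h} g = (\<Sum>i<n. integral {a + real i * h..a + real i * h + h} g)"
proof (induction n)
  case 0
  then show ?case by simp
next
  case (Suc n)
  have le: "a + real n * h \<le> b" using Suc.prems h by (simp add: algebra_simps)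
  have int: "g integrable_on {a..a + real (Suc n) * h}"
    by (rule integrable_continuous_real, rule continuous_on_subset[OF cg]) (use Suc.prems in auto)
  have "integral {a..a + real (Suc n) * h} g = integral {a..a + real n * h} g + integral {a + real n * h..a + real (Suc n) * h} g"
    by (rule Henstock_Kurzweil_Integration.integral_combine[symmetric, OF _ _ int]) (use h in \<open>auto simp: algebra_simps\<close>)
  then show ?case using Suc.IH[OF le] by (simp add: algebra_simps)
qed

lemma riemann:
  fixes g :: "real \<Rightarrow> 'a::banach"
  assumes cg: "continuous_on {a..b} g" and ab: "a \<le> b"
  shows "((\<lambda>n. \<Sum>i<n. ((b-a)/n) *\<^sub>R g (a + real i*((b-a)/n))) \<longlongrightarrow> integral {a..b} g) sequentially"
proof (rule LIMSEQ_I)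
  fix r :: real assume r: "r > 0"
  define e where "e = r / (b - a + 1)"
  have e: "e > 0" using r ab by (simp add: e_def)
  have uc: "uniformly_continuous_on {a..b} g" using cg by (intro compact_uniformly_continuous) auto
  obtain d where d: "d > 0" "\<And>x x'. x \<in> {a..b} \<Longrightarrow> x' \<in> {a..b} \<Longrightarrow> dist x' x < d \<Longrightarrow> dist (g x') (g x) < e"
    using uc e unfolding uniformly_continuous_on_def by metis
  obtain N :: nat where N: "(b - a) / d < real N" using reals_Archimedean2 by blast
  show "\<exists>no. \<forall>n\<ge>no. norm ((\<Sum>i<n. ((b-a)/n) *\<^sub>R g (a + real i*((b-a)/n))) - integral {a..b} g) < r"
  proof (intro exI[of _ "Suc N"] allI impI)
    fix n assume n: "Suc N \<le> n"
    define h where "h = (b - a) / real n"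
    have n0: "real n > 0" using n by simp
    have h0: "h \<ge> 0" using ab n0 by (simp add: h_def)
    have hd: "h < d"
    proof -
      have "(b - a) / d < real n" using N n by simp
      then have "b - a < real n * d" using d(1) by (simp add: divide_less_eq)
      then show ?thesis using n0 unfolding h_def by (simp add: divide_less_eq mult.commute)
    qed
    have nh: "a + real n * h = b" using n0 by (simp add: h_def)
    have split: "integral {a..b} g = (\<Sum>i<n. integral {a + real i * h..a + real i * h + h} g)"
      using int_split[OF cg h0, of n] nh by simp
    have each: "norm (h *\<^sub>R g (a + real i * h) - integral {a + real i * h..a + real i * h + h} g) \<le> h * e"
      if i: "i < n" for i
    proof -
      define c where "c = a + real i * h"
      have c: "a \<le> c" "c + h \<le> b"
      proof -
        show "a \<le> c" using h0 by (simp add: c_def)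
        have "real i * h + h \<le> real n * h" using i h0
          by (metis add.commute distrib_left_numeral mult.commute mult_right_mono of_nat_Suc of_nat_le_iff Suc_leI
              mult.right_neutral ring_class.ring_distribs(1))
        then show "c + h \<le> b" using nh by (simp add: c_def)
      qed
      have int: "g integrable_on {c..c+h}"
        by (rule integrable_continuous_real, rule continuous_on_subset[OF cg]) (use c h0 in auto)
      have eq: "integral {c..c+h} g - h *\<^sub>R g c = integral {c..c+h} (\<lambda>r. g r - g c)"
        using int h0 by (subst integral_diff) auto
      have "norm (integral {c..c+h} (\<lambda>r. g r - g c)) \<le> integral {c..c+h} (\<lambda>r. e)"
      proof (rule integral_norm_bound_integral)
        show "(\<lambda>r. g r - g c) integrable_on {c..c+h}" using int by (intro integrable_diff) auto
        show "(\<lambda>r. e) integrable_on {c..c+h}" by (rule integrable_const_ivl)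
        fix x assume x: "x \<in> {c..c+h}"
        have "dist x c < d" using x hd by (auto simp: dist_real_def)
        then show "norm (g x - g c) \<le> e" using d(2)[of c x] x c h0 by (auto simp: dist_norm)
      qed
      also have "\<dots> = h * e" using h0 by simp
      finally show ?thesis using eq unfolding c_def[symmetric] by (metis norm_minus_commute)
    qed
    have "(\<Sum>i<n. ((b-a)/n) *\<^sub>R g (a + real i*((b-a)/n))) - integral {a..b} g
        = (\<Sum>i<n. h *\<^sub>R g (a + real i * h) - integral {a + real i * h..a + real i * h + h} g)"
      unfolding split h_def by (simp add: sum_subtractf)
    also have "norm \<dots> \<le> (\<Sum>i<n. h * e)"
      by (rule order_trans[OF norm_sum sum_mono]) (use each in auto)
    also have "\<dots> = (b - a) * e" using n0 by (simp add: h_def)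
    also have "\<dots> < r"
    proof -
      have "(b - a) * e = r * ((b - a) / (b - a + 1))" by (simp add: e_def)
      also have "\<dots> < r * 1" using r ab by (intro mult_strict_left_mono) auto
      finally show ?thesis by simp
    qed
    finally show "norm ((\<Sum>i<n. ((b-a)/n) *\<^sub>R g (a + real i*((b-a)/n))) - integral {a..b} g) < r" .
  qed
qed

definition Clin :: "(real \<Rightarrow> 'a::banach \<Rightarrow>\<^sub>L 'a) \<Rightarrow> ('a \<Rightarrow> 'b::banach) \<Rightarrow> bool" where
  "Clin T C \<longleftrightarrow> (\<forall>x\<in>ngen_dom T. \<forall>y\<in>ngen_dom T. \<forall>c. C (x + y) = C x + C y \<and> C (c *\<^sub>R x) = c *\<^sub>R C x)"

lemma C_diff:
  assumes "Clin T C" "gen T x u" "gen T y v"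
  shows "C (x - y) = C x - C y"
proof -
  have "y \<in> ngen_dom T" "x \<in> ngen_dom T" "(-1) *\<^sub>R y \<in> ngen_dom T"
    using assms gen_ngen gen_scale by blast+
  then show ?thesis using assms(1) unfolding Clin_def
    by (metis (no_types, lifting) scaleR_minus1_left uminus_add_conv_diff add.commute diff_conv_add_uminus)
qed

lemma C_sum:
  assumes "Clin T C" "finite I" "\<And>i. i \<in> I \<Longrightarrow> gen T (w i) (v i)"
  shows "C (\<Sum>i\<in>I. w i) = (\<Sum>i\<in>I. C (w i))"
  using assms(2,3)
proof (induction I rule: finite_induct)
  case empty
  have "0 \<in> ngen_dom T" using gen_ngen[OF gen_zero] by blast
  then have "C (0 *\<^sub>R 0) = 0 *\<^sub>R C 0" using assms(1) unfolding Clin_def by blast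
  then show ?case by simp
next
  case (insert i I)
  have "w i \<in> ngen_dom T" using insert gen_ngen by blast
  moreover have "(\<Sum>i\<in>I. w i) \<in> ngen_dom T" using gen_ngen[OF gen_sum[of I T w v]] insert by auto
  ultimately have "C (w i + (\<Sum>i\<in>I. w i)) = C (w i) + C (\<Sum>i\<in>I. w i)" using assms(1) unfolding Clin_def by blast
  then show ?case using insert by simp
qed

lemma C_scale:
  assumes "Clin T C" "gen T x u"
  shows "C (c *\<^sub>R x) = c *\<^sub>R C x"
  using assms gen_ngen unfolding Clin_def by blast

lemma C_bound:
  assumes "\<forall>x\<in>ngen_dom T. norm (C x) \<le> c * (norm x + norm (ngen T x))" "gen T x u"
  shows "norm (C x) \<le> c * (norm x + norm u)"
  using assms gen_ngen by metis

lemma C_cont: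
  assumes sg: "C0_semigroup T" and Cl: "Clin T C" and Cb: "\<forall>x\<in>ngen_dom T. norm (C x) \<le> c * (norm x + norm (ngen T x))"
    and g: "gen T x u"
  shows "continuous_on {0..} (\<lambda>r. C (blinfun_apply (T r) x))"
  unfolding continuous_on_def
proof (intro ballI)
  fix r0 :: real assume r0: "r0 \<in> {0..}"
  let ?F = "at r0 within {0..}"
  have tx: "((\<lambda>r. blinfun_apply (T r) x) \<longlongrightarrow> blinfun_apply (T r0) x) ?F"
    using sg_cont[OF sg, of x] r0 unfolding continuous_on_def by blast
  have tu: "((\<lambda>r. blinfun_apply (T r) u) \<longlongrightarrow> blinfun_apply (T r0) u) ?F"
    using sg_cont[OF sg, of u] r0 unfolding continuous_on_def by blast
  show "((\<lambda>r. C (blinfun_apply (T r) x)) \<longlongrightarrow> C (blinfun_apply (T r0) x)) ?F"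
  proof (rule LIM_zero_cancel, rule Lim_null_comparison)
    show "\<forall>\<^sub>F r in ?F. norm (C (blinfun_apply (T r) x) - C (blinfun_apply (T r0) x))
        \<le> c * (norm (blinfun_apply (T r) x - blinfun_apply (T r0) x) + norm (blinfun_apply (T r) u - blinfun_apply (T r0) u))"
      unfolding eventually_at_filter
    proof (rule always_eventually, intro allI impI)
      fix r :: real assume "r \<noteq> r0" "r \<in> {0..}"
      then have r: "r \<ge> 0" by simp
      have g1: "gen T (blinfun_apply (T r) x) (blinfun_apply (T r) u)" using gen_T[OF sg g r] .
      have g2: "gen T (blinfun_apply (T r0) x) (blinfun_apply (T r0) u)" using gen_T[OF sg g] r0 by simp
      have "C (blinfun_apply (T r) x) - C (blinfun_apply (T r0) x) = C (blinfun_apply (T r) x - blinfun_apply (T r0) x)"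
        using C_diff[OF Cl g1 g2] by simp
      then show "norm (C (blinfun_apply (T r) x) - C (blinfun_apply (T r0) x))
        \<le> c * (norm (blinfun_apply (T r) x - blinfun_apply (T r0) x) + norm (blinfun_apply (T r) u - blinfun_apply (T r0) u))"
        using C_bound[OF Cb gen_diff[OF g1 g2]] by simp
    qed
    have "((\<lambda>r. c * (norm (blinfun_apply (T r) x - blinfun_apply (T r0) x) + norm (blinfun_apply (T r) u - blinfun_apply (T r0) u)))
        \<longlongrightarrow> c * (norm (blinfun_apply (T r0) x - blinfun_apply (T r0) x) + norm (blinfun_apply (T r0) u - blinfun_apply (T r0) u))) ?F"
      by (intro tendsto_intros tx tu)
    then show "((\<lambda>r. c * (norm (blinfun_apply (T r) x - blinfun_apply (T r0) x) + norm (blinfun_apply (T r) u - blinfun_apply (T r0) u))) \<longlongrightarrow> 0) ?F"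
      by simp
  qed
qed

lemma CZ:
  assumes sg: "C0_semigroup T" and bdd: "bounded_semigroup T" and Cl: "Clin T C"
    and Cb: "\<forall>x\<in>ngen_dom T. norm (C x) \<le> c * (norm x + norm (ngen T x))"
    and g: "gen T x u" and ab: "0 \<le> a" "a \<le> b"
  shows "C (integral {a..b} (\<lambda>r. blinfun_apply (T r) x)) = integral {a..b} (\<lambda>r. C (blinfun_apply (T r) x))"
proof -
  define z where "z = integral {a..b} (\<lambda>r. blinfun_apply (T r) x)"
  define v where "v = blinfun_apply (T a) x - blinfun_apply (T b) x"
  have gz: "gen T z v" unfolding z_def v_def by (rule gen_integral[OF sg ab])
  have vI: "v = integral {a..b} (\<lambda>r. blinfun_apply (T r) u)" unfolding v_def using int_gen[OF sg bdd g ab] by simp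
  define p where "p = (\<lambda>(n::nat) (i::nat). a + real i * ((b - a) / real n))"
  have p0: "p n i \<ge> 0" for n i using ab unfolding p_def by simp
  define R1 where "R1 = (\<lambda>n. \<Sum>i<n. ((b-a)/n) *\<^sub>R blinfun_apply (T (p n i)) x)"
  define R2 where "R2 = (\<lambda>n. \<Sum>i<n. ((b-a)/n) *\<^sub>R blinfun_apply (T (p n i)) u)"
  define R3 where "R3 = (\<lambda>n. \<Sum>i<n. ((b-a)/n) *\<^sub>R C (blinfun_apply (T (p n i)) x))"
  have cab: "\<And>f::real \<Rightarrow> 'b. continuous_on {0..} f \<Longrightarrow> continuous_on {a..b} f"
    by (erule continuous_on_subset) (use ab in auto)
  have cab': "\<And>f::real \<Rightarrow> 'a. continuous_on {0..} f \<Longrightarrow> continuous_on {a..b} f"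
    by (erule continuous_on_subset) (use ab in auto)
  have L1: "R1 \<longlonglongrightarrow> z" unfolding R1_def z_def p_def by (rule riemann[OF cab'[OF sg_cont[OF sg]] ab(2)])
  have L2: "R2 \<longlonglongrightarrow> v" unfolding R2_def vI p_def by (rule riemann[OF cab'[OF sg_cont[OF sg]] ab(2)])
  have L3: "R3 \<longlonglongrightarrow> integral {a..b} (\<lambda>r. C (blinfun_apply (T r) x))"
    unfolding R3_def p_def by (rule riemann[OF cab[OF C_cont[OF sg Cl Cb g]] ab(2)])
  have gi: "gen T (((b-a)/n) *\<^sub>R blinfun_apply (T (p n i)) x) (((b-a)/n) *\<^sub>R blinfun_apply (T (p n i)) u)" for n i
    by (rule gen_scale, rule gen_T[OF sg g p0])
  have gR: "gen T (R1 n) (R2 n)" for n unfolding R1_def R2_def by (rule gen_sum) (use gi in auto)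
  have CR: "C (R1 n) = R3 n" for n
    unfolding R1_def R3_def
    by (subst C_sum[OF Cl _ gi]) (auto intro!: sum.cong C_scale[OF Cl gen_T[OF sg g p0]])
  have "(\<lambda>n. C (R1 n)) \<longlonglongrightarrow> C z"
  proof (rule LIM_zero_cancel, rule Lim_null_comparison)
    show "\<forall>\<^sub>F n in sequentially. norm (C (R1 n) - C z) \<le> c * (norm (R1 n - z) + norm (R2 n - v))"
    proof (rule always_eventually, rule allI)
      fix n
      show "norm (C (R1 n) - C z) \<le> c * (norm (R1 n - z) + norm (R2 n - v))"
        using C_bound[OF Cb gen_diff[OF gR gz]] C_diff[OF Cl gR gz] by simp
    qed
    have "(\<lambda>n. c * (norm (R1 n - z) + norm (R2 n - v))) \<longlonglongrightarrow> c * (norm (z - z) + norm (v - v))"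
      by (intro tendsto_intros L1 L2)
    then show "(\<lambda>n. c * (norm (R1 n - z) + norm (R2 n - v))) \<longlonglongrightarrow> 0" by simp
  qed
  then have "R3 \<longlonglongrightarrow> C z" using CR by simp
  then show ?thesis using LIMSEQ_unique[OF _ L3] unfolding z_def by blast
qed

lemma int_CS:
  fixes g :: "real \<Rightarrow> real"
  assumes cg: "continuous_on {a..b} g" and ab: "a \<le> b"
  shows "(integral {a..b} g)\<^sup>2 \<le> (b - a) * integral {a..b} (\<lambda>r. (g r)\<^sup>2)"
proof (cases "a = b")
  case True then show ?thesis by simp
next
  case False
  then have L: "b - a > 0" using ab by simp
  define I where "I = integral {a..b} g"
  define J where "J = integral {a..b} (\<lambda>r. (g r)\<^sup>2)"
  define m where "m = I / (b - a)"
  have ig: "g integrable_on {a..b}" using cg by (rule integrable_continuous_real)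
  have ig2: "(\<lambda>r. (g r)\<^sup>2) integrable_on {a..b}"
    by (rule integrable_continuous_real) (intro continuous_intros cg)
  have ig3: "(\<lambda>r. (-2 * m) * g r) integrable_on {a..b}" using integrable_cmul[OF ig, of "-2*m"] by simp
  have "0 \<le> integral {a..b} (\<lambda>r. (g r - m)\<^sup>2)"
    by (rule integral_nonneg) (auto intro!: integrable_continuous_real continuous_intros cg)
  also have "integral {a..b} (\<lambda>r. (g r - m)\<^sup>2) = integral {a..b} (\<lambda>r. ((g r)\<^sup>2 + (-2 * m) * g r) + m\<^sup>2)"
    by (rule integral_cong) (simp add: power2_eq_square algebra_simps)
  also have "\<dots> = J + (-2 * m) * I + (b - a) * m\<^sup>2"
  proof -
    have "integral {a..b} (\<lambda>r. ((g r)\<^sup>2 + (-2 * m) * g r) + m\<^sup>2) = integral {a..b} (\<lambda>r. (g r)\<^sup>2 + (-2 * m) * g r) + integral {a..b} (\<lambda>r. m\<^sup>2)"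
      by (rule integral_add[OF integrable_add[OF ig2 ig3] integrable_const_ivl])
    also have "integral {a..b} (\<lambda>r. (g r)\<^sup>2 + (-2 * m) * g r) = J + integral {a..b} (\<lambda>r. (-2 * m) * g r)"
      unfolding J_def by (rule integral_add[OF ig2 ig3])
    also have "integral {a..b} (\<lambda>r. (-2 * m) * g r) = (-2 * m) * I" unfolding I_def by simp
    also have "integral {a..b} (\<lambda>r. m\<^sup>2) = (b - a) * m\<^sup>2" using ab by simp
    finally show ?thesis .
  qed
  also have "\<dots> = J - I\<^sup>2 / (b - a)"
  proof -
    have e1: "(b - a) * m\<^sup>2 = I\<^sup>2 / (b - a)" using L by (simp add: m_def power2_eq_square)
    have e2: "(-2 * m) * I = -2 * (I\<^sup>2 / (b - a))" by (simp add: m_def power2_eq_square)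
    show ?thesis using e1 e2 by linarith
  qed
  finally have "I\<^sup>2 / (b - a) \<le> J" by simp
  then show ?thesis using L unfolding I_def[symmetric] J_def[symmetric] by (simp add: divide_le_eq mult.commute)
qed

lemma powr_iff_le:
  fixes t r e :: real
  assumes "t > 0" "r > 0" "e > 0"
  shows "t powr e \<le> r \<longleftrightarrow> t \<le> r powr (1/e)"
proof
  assume "t powr e \<le> r"
  then have "(t powr e) powr (1/e) \<le> r powr (1/e)" using assms by (intro powr_mono2) auto
  then show "t \<le> r powr (1/e)" using assms by (simp add: powr_powr)
next
  assume "t \<le> r powr (1/e)"
  then have "t powr e \<le> (r powr (1/e)) powr e" using assms by (intro powr_mono2) auto
  then show "t powr e \<le> r" using assms by (simp add: powr_powr)
qed

lemma powr_iff_ge: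
  fixes t r e :: real
  assumes "t > 0" "r > 0" "e > 0"
  shows "r \<le> t powr e \<longleftrightarrow> r powr (1/e) \<le> t"
proof
  assume "r \<le> t powr e"
  then have "r powr (1/e) \<le> (t powr e) powr (1/e)" using assms by (intro powr_mono2) auto
  then show "r powr (1/e) \<le> t" using assms by (simp add: powr_powr)
next
  assume "r powr (1/e) \<le> t"
  then have "(r powr (1/e)) powr e \<le> t powr e" using assms by (intro powr_mono2) auto
  then show "r \<le> t powr e" using assms by (simp add: powr_powr)
qed

lemma Qint:
  fixes \<beta> \<delta> r :: real
  assumes \<beta>: "\<beta> > 0" and \<delta>: "\<delta> > 0" and r: "r \<ge> 0"
  shows "(\<integral>\<^sup>+ t. ennreal (indicator {0<..} t * (1/(\<delta>\<^sup>2*t))) * ennreal (indicator {t powr (2*\<beta>)..2 * t powr (2*\<beta>)} r) \<partial>lborel)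
     \<le> ennreal (ln 2 / (2*\<beta>*\<delta>\<^sup>2))"
proof (cases "r = 0")
  case True
  have "(\<lambda>t. ennreal (indicator {0<..} t * (1/(\<delta>\<^sup>2*t))) * ennreal (indicator {t powr (2*\<beta>)..2 * t powr (2*\<beta>)} r)) = (\<lambda>t. 0)"
    using True \<beta> by (auto simp: indicator_def fun_eq_iff)
  then show ?thesis by (simp only:) simp
next
  case False
  then have r: "r > 0" using r by simp
  define e where "e = 2 * \<beta>"
  have e: "e > 0" using \<beta> by (simp add: e_def)
  define lo where "lo = (r/2) powr (1/e)"
  define hi where "hi = r powr (1/e)"
  have lo: "lo > 0" using r by (simp add: lo_def)
  have hi: "hi > 0" using r by (simp add: hi_def)
  have lohi: "lo \<le> hi" unfolding lo_def hi_def using r e by (intro powr_mono2) auto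
  have pt: "ennreal (indicator {0<..} t * (1/(\<delta>\<^sup>2*t))) * ennreal (indicator {t powr (2*\<beta>)..2 * t powr (2*\<beta>)} r)
     = ennreal (indicator {lo..hi} t * (1/(\<delta>\<^sup>2*t)))" for t
  proof (cases "t > 0")
    case True
    have "(t powr e \<le> r \<and> r \<le> 2 * t powr e) \<longleftrightarrow> (lo \<le> t \<and> t \<le> hi)"
      using powr_iff_le[OF True r e] powr_iff_ge[OF True _ e, of "r/2"] r unfolding lo_def hi_def by auto
    then show ?thesis using True unfolding e_def by (auto simp: indicator_def)
  next
    case False
    then have "\<not> (lo \<le> t)" using lo by auto
    then show ?thesis using False by (auto simp: indicator_def)
  qed
  have d: "((\<lambda>t. ln t / \<delta>\<^sup>2) has_vector_derivative (1/(\<delta>\<^sup>2*t))) (at t within {lo..hi})" if "t \<in> {lo..hi}" for t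
  proof -
    have "t > 0" using that lo by auto
    then have "((\<lambda>t. ln t / \<delta>\<^sup>2) has_real_derivative 1/(\<delta>\<^sup>2*t)) (at t within {lo..hi})"
      using \<delta> by (auto intro!: derivative_eq_intros simp: field_simps power2_eq_square)
    then show ?thesis by (simp add: has_real_derivative_iff_has_vector_derivative[symmetric])
  qed
  have hi1: "((\<lambda>t. 1/(\<delta>\<^sup>2*t)) has_integral (ln hi / \<delta>\<^sup>2 - ln lo / \<delta>\<^sup>2)) {lo..hi}"
    by (rule fundamental_theorem_of_calculus[OF lohi d])
  have hi2: "((\<lambda>t. indicator {lo..hi} t * (1/(\<delta>\<^sup>2*t))) has_integral (ln hi / \<delta>\<^sup>2 - ln lo / \<delta>\<^sup>2)) UNIV"
  proof -
    have "(\<lambda>t. indicator {lo..hi} t * (1/(\<delta>\<^sup>2*t))) = (\<lambda>t. if t \<in> {lo..hi} then 1/(\<delta>\<^sup>2*t) else 0)"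
      by (simp add: indicator_def fun_eq_iff)
    then show ?thesis using hi1 has_integral_restrict_UNIV[of "{lo..hi}" "\<lambda>t. 1/(\<delta>\<^sup>2*t)"] by simp
  qed
  have val: "ln hi / \<delta>\<^sup>2 - ln lo / \<delta>\<^sup>2 = ln 2 / (2*\<beta>*\<delta>\<^sup>2)"
    using r e \<delta> unfolding hi_def lo_def e_def by (simp add: ln_div diff_divide_distrib[symmetric] add_divide_distrib[symmetric])
  have "(\<integral>\<^sup>+ t. ennreal (indicator {lo..hi} t * (1/(\<delta>\<^sup>2*t))) \<partial>lborel) = ennreal (ln hi / \<delta>\<^sup>2 - ln lo / \<delta>\<^sup>2)"
    by (rule nn_integral_has_integral_lborel[OF _ _ hi2]) (use lo in \<open>auto simp: indicator_def\<close>)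
  then show ?thesis unfolding pt val by simp
qed

lemma ptwise:
  fixes T :: "real \<Rightarrow> 'a::banach \<Rightarrow>\<^sub>L 'a" and C :: "'a \<Rightarrow> 'b::banach"
  assumes sg: "C0_semigroup T" and bdd: "bounded_semigroup T"
    and inj: "inj_on (ngen T) (ngen_dom T)" and Cl: "Clin T C"
    and Cb: "\<forall>x\<in>ngen_dom T. norm (C x) \<le> c * (norm x + norm (ngen T x))"
    and lower: "\<forall>x\<in>ngen_dom T \<inter> ngen T ` ngen_dom T.
       norm (C (ngen_inv T x)) \<ge> \<delta> * norm (frac_neg_pow T \<beta> x)"
    and \<delta>: "\<delta> > 0" and g: "gen T x u" and t: "t > 0"
  shows "(norm ((t powr (-\<beta>)) *\<^sub>R frac_neg_pow T \<beta>
            (blinfun_apply (T (2 * t powr (2 * \<beta>))) x - blinfun_apply (T (t powr (2 * \<beta>))) x)))\<^sup>2 / t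
     \<le> integral {t powr (2 * \<beta>)..2 * t powr (2 * \<beta>)} (\<lambda>r. (norm (C (blinfun_apply (T r) x)))\<^sup>2) / (\<delta>\<^sup>2 * t)"
proof -
  define s where "s = t powr (2 * \<beta>)"
  have s: "s > 0" using t by (simp add: s_def)
  define z where "z = integral {s..2 * s} (\<lambda>r. blinfun_apply (T r) x)"
  define y where "y = blinfun_apply (T (2 * s)) x - blinfun_apply (T s) x"
  define P where "P = frac_neg_pow T \<beta> y"
  define J where "J = integral {s..2 * s} (\<lambda>r. (norm (C (blinfun_apply (T r) x)))\<^sup>2)"
  have gz: "gen T z (blinfun_apply (T s) x - blinfun_apply (T (2 * s)) x)"
    unfolding z_def by (rule gen_integral[OF sg]) (use s in auto)
  have gy: "gen T ((-1) *\<^sub>R z) y" using gen_scale[OF gz, of "-1"] unfolding y_def by simp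
  have yD: "y \<in> ngen_dom T"
    using gen_ngen[OF gen_diff[OF gen_T[OF sg g, of "2 * s"] gen_T[OF sg g, of s]]] s unfolding y_def by auto
  have mzD: "(-1) *\<^sub>R z \<in> ngen_dom T" and Amz: "ngen T ((-1) *\<^sub>R z) = y" using gen_ngen[OF gy] by auto
  have yR: "y \<in> ngen T ` ngen_dom T" using mzD Amz by force
  have inv: "ngen_inv T y = (-1) *\<^sub>R z"
    unfolding ngen_inv_def
  proof (rule the_equality)
    show "(-1) *\<^sub>R z \<in> ngen_dom T \<and> ngen T ((-1) *\<^sub>R z) = y" using mzD Amz by simp
    fix w assume "w \<in> ngen_dom T \<and> ngen T w = y"
    then show "w = (-1) *\<^sub>R z" using inj mzD Amz by (metis inj_onD)
  qed
  have Cinv: "C (ngen_inv T y) = - C z" unfolding inv using C_scale[OF Cl gz, of "-1"] by simp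
  have yDR: "y \<in> ngen_dom T \<inter> ngen T ` ngen_dom T" using yD yR by blast
  have "\<delta> * norm P \<le> norm (C (ngen_inv T y))" using lower yDR unfolding P_def by blast
  then have low: "\<delta> * norm P \<le> norm (C z)" using Cinv by simp
  have cont: "continuous_on {s..2 * s} (\<lambda>r. C (blinfun_apply (T r) x))"
    by (rule continuous_on_subset[OF C_cont[OF sg Cl Cb g]]) (use s in auto)
  have Cz: "C z = integral {s..2 * s} (\<lambda>r. C (blinfun_apply (T r) x))"
    unfolding z_def by (rule CZ[OF sg bdd Cl Cb g]) (use s in auto)
  have nb: "norm (C z) \<le> integral {s..2 * s} (\<lambda>r. norm (C (blinfun_apply (T r) x)))"
    unfolding Cz
    by (rule integral_norm_bound_integral) (auto intro!: integrable_continuous_real continuous_intros cont)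
  have cs: "(integral {s..2 * s} (\<lambda>r. norm (C (blinfun_apply (T r) x))))\<^sup>2 \<le> (2 * s - s) * J"
    unfolding J_def by (rule int_CS) (use s in \<open>auto intro!: continuous_intros cont\<close>)
  have "(\<delta> * norm P)\<^sup>2 \<le> (norm (C z))\<^sup>2" using low \<delta> by (intro power_mono) auto
  also have "\<dots> \<le> (integral {s..2 * s} (\<lambda>r. norm (C (blinfun_apply (T r) x))))\<^sup>2"
    using nb by (intro power_mono) auto
  also have "\<dots> \<le> s * J" using cs by simp
  finally have key: "\<delta>\<^sup>2 * (norm P)\<^sup>2 \<le> s * J" by (simp add: power_mult_distrib)
  have tp: "(t powr (-\<beta>))\<^sup>2 = 1 / s"
  proof -
    have "t powr (2 * \<beta>) = t powr \<beta> * t powr \<beta>" by (simp add: powr_add[symmetric])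
    then show ?thesis unfolding s_def power2_eq_square using t by (simp add: powr_minus divide_inverse)
  qed
  have "(norm ((t powr (-\<beta>)) *\<^sub>R P))\<^sup>2 / t = (norm P)\<^sup>2 / (s * t)"
    using t by (simp add: power_mult_distrib tp)
  also have "\<dots> \<le> (s * J / \<delta>\<^sup>2) / (s * t)"
    using key \<delta> s t by (intro divide_right_mono) (auto simp: field_simps)
  also have "\<dots> = J / (\<delta>\<^sup>2 * t)" using s by simp
  finally show ?thesis unfolding s_def[symmetric] P_def y_def J_def by simp
qed

theorem corollary4p5:
  fixes T :: "real \<Rightarrow> 'a::banach \<Rightarrow>\<^sub>L 'a" and C :: "'a \<Rightarrow> 'b::banach"
    and \<beta> K \<delta> :: real
  assumes sg: "C0_semigroup T" and bdd: "bounded_semigroup T"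
    and inj: "inj_on (ngen T) (ngen_dom T)"
    and dense: "closure (ngen T ` ngen_dom T) = UNIV"
    and C_lin: "\<forall>x\<in>ngen_dom T. \<forall>y\<in>ngen_dom T. \<forall>c. C (x + y) = C x + C y \<and> C (c *\<^sub>R x) = c *\<^sub>R C x"
    and C_bdd: "\<exists>c. \<forall>x\<in>ngen_dom T. norm (C x) \<le> c * (norm x + norm (ngen T x))"
    and C_adm: "\<exists>M. \<forall>x\<in>ngen_dom T. norm x = 1 \<longrightarrow>
                  (\<integral>\<^sup>+ t\<in>{0..}. ennreal ((norm (C (blinfun_apply (T t) x)))\<^sup>2) \<partial>lborel) \<le> ennreal M"
    and \<beta>: "0 < \<beta>" "\<beta> < 1" and K: "K > 0" and \<delta>: "\<delta> > 0"
    and sqfun: "\<forall>x. ennreal ((norm x)\<^sup>2) \<le> ennreal (K\<^sup>2) *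
       (\<integral>\<^sup>+ t\<in>{0<..}. ennreal ((norm ((t powr (-\<beta>)) *\<^sub>R frac_neg_pow T \<beta>
            (blinfun_apply (T (2 * t powr (2 * \<beta>))) x - blinfun_apply (T (t powr (2 * \<beta>))) x)))\<^sup>2 / t) \<partial>lborel)"
    and lower: "\<forall>x\<in>ngen_dom T \<inter> ngen T ` ngen_dom T.
       norm (C (ngen_inv T x)) \<ge> \<delta> * norm (frac_neg_pow T \<beta> x)"
  shows "\<exists>m>0. \<forall>x\<in>ngen_dom T. ennreal (m\<^sup>2 * (norm x)\<^sup>2) \<le>
           (\<integral>\<^sup>+ t\<in>{0..}. ennreal ((norm (C (blinfun_apply (T t) x)))\<^sup>2) \<partial>lborel)"
proof -
  obtain c where Cb: "\<forall>x\<in>ngen_dom T. norm (C x) \<le> c * (norm x + norm (ngen T x))" using C_bdd by blast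
  have Cl: "Clin T C" using C_lin unfolding Clin_def by blast
  define L where "L = ln 2 / (2*\<beta>*\<delta>\<^sup>2)"
  have L: "L > 0" using \<beta> \<delta> by (simp add: L_def)
  define m where "m = sqrt (1 / (K\<^sup>2 * L))"
  have m: "m > 0" using K L by (simp add: m_def)
  have m2: "m\<^sup>2 * (K\<^sup>2 * L) = 1" using K L by (simp add: m_def)
  show ?thesis
  proof (intro exI[of _ m] conjI ballI)
    show "m > 0" by (rule m)
    fix x assume x: "x \<in> ngen_dom T"
    define u where "u = ngen T x"
    have g: "gen T x u" unfolding u_def using dom_gen[OF x] .
    define f where "f = (\<lambda>r. (norm (C (blinfun_apply (T r) x)))\<^sup>2)"
    define f' where "f' = (\<lambda>r. indicator {0..} r * f r)"
    have fc: "continuous_on {0..} f" unfolding f_def by (intro continuous_intros C_cont[OF sg Cl Cb g])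
    have f'm: "f' \<in> borel_measurable borel"
      using borel_measurable_continuous_on_indicator[OF _ fc] unfolding f'_def by simp
    have f'0: "f' r \<ge> 0" for r unfolding f'_def f_def by simp
    define F where "F = (\<integral>\<^sup>+ t\<in>{0..}. ennreal ((norm (C (blinfun_apply (T t) x)))\<^sup>2) \<partial>lborel)"
    have Feq: "F = (\<integral>\<^sup>+ r. ennreal (f' r) \<partial>lborel)"
      unfolding F_def by (rule nn_integral_cong) (auto simp: indicator_def f'_def f_def)
    define LHS where "LHS = (\<lambda>t. (norm ((t powr (-\<beta>)) *\<^sub>R frac_neg_pow T \<beta>
            (blinfun_apply (T (2 * t powr (2 * \<beta>))) x - blinfun_apply (T (t powr (2 * \<beta>))) x)))\<^sup>2 / t)"
    define H where "H = (\<lambda>t r. ennreal (indicator {0<..} t * (1/(\<delta>\<^sup>2*t))) * ennreal (indicator {t powr (2*\<beta>)..2 * t powr (2*\<beta>)} r) * ennreal (f' r))"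
    have Hm: "(\<lambda>(t,r). H t r) \<in> borel_measurable (lborel \<Otimes>\<^sub>M lborel)"
    proof -
      have e: "(\<lambda>(t,r). indicator {t powr (2*\<beta>)..2 * t powr (2*\<beta>)} r) = (\<lambda>p::real\<times>real. if fst p powr (2*\<beta>) \<le> snd p \<and> snd p \<le> 2 * fst p powr (2*\<beta>) then 1 else (0::real))"
        by (auto simp: indicator_def fun_eq_iff)
      have m1: "(\<lambda>p::real\<times>real. if fst p powr (2*\<beta>) \<le> snd p \<and> snd p \<le> 2 * fst p powr (2*\<beta>) then 1 else (0::real)) \<in> borel_measurable (lborel \<Otimes>\<^sub>M lborel)"
        by measurable
      show ?thesis
        using m1 f'm unfolding e[symmetric] H_def by measurable
    qed
    have step1: "ennreal (LHS t) * indicator {0<..} t \<le> (\<integral>\<^sup>+ r. H t r \<partial>lborel)" for t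
    proof (cases "t > 0")
      case False
      then show ?thesis by simp
    next
      case True
      define s where "s = t powr (2 * \<beta>)"
      have s: "s > 0" using True by (simp add: s_def)
      define J where "J = integral {s..2 * s} f"
      have J0: "J \<ge> 0" unfolding J_def f_def
        by (rule integral_nonneg) (auto intro!: integrable_continuous_real continuous_on_subset[OF fc[unfolded f_def]] simp: s)
      have pw: "LHS t \<le> J / (\<delta>\<^sup>2 * t)"
        unfolding LHS_def J_def s_def f_def using ptwise[OF sg bdd inj Cl Cb lower \<delta> g True] by simp
      have im: "(\<lambda>r. indicator {s..2 * s} r * f' r) \<in> borel_measurable borel" using f'm by measurable
      have hi: "((\<lambda>r. indicator {s..2 * s} r * f' r) has_integral J) UNIV"
      proof -
        have "(\<lambda>r. indicator {s..2 * s} r * f' r) = (\<lambda>r. if r \<in> {s..2 * s} then f r else 0)"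
          using s by (auto simp: fun_eq_iff indicator_def f'_def)
        moreover have "(f has_integral J) {s..2 * s}" unfolding J_def
          by (rule integrable_integral, rule integrable_continuous_real, rule continuous_on_subset[OF fc]) (use s in auto)
        ultimately show ?thesis using has_integral_restrict_UNIV[of "{s..2 * s}" f J] by simp
      qed
      have EJ: "ennreal J = (\<integral>\<^sup>+ r. ennreal (indicator {s..2 * s} r * f' r) \<partial>lborel)"
        by (rule nn_integral_has_integral_lborel[OF im _ hi, symmetric]) (simp add: f'0)
      have "ennreal (LHS t) * indicator {0<..} t = ennreal (LHS t)" using True by simp
      also have "\<dots> \<le> ennreal (J / (\<delta>\<^sup>2 * t))" using pw by (rule ennreal_leI)
      also have "\<dots> = ennreal (1 / (\<delta>\<^sup>2 * t)) * ennreal J"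
        using True \<delta> J0 by (simp add: ennreal_mult[symmetric])
      also have "\<dots> = (\<integral>\<^sup>+ r. ennreal (1 / (\<delta>\<^sup>2 * t)) * ennreal (indicator {s..2 * s} r * f' r) \<partial>lborel)"
        unfolding EJ by (rule nn_integral_cmult[symmetric]) (use im in measurable)
      also have "\<dots> = (\<integral>\<^sup>+ r. H t r \<partial>lborel)"
        unfolding H_def s_def using True
        by (intro nn_integral_cong) (simp add: ennreal_mult' f'0 mult.assoc)
      finally show ?thesis .
    qed
    have Qm: "(\<lambda>t. ennreal (indicator {0<..} t * (1/(\<delta>\<^sup>2*t))) * ennreal (indicator {t powr (2*\<beta>)..2 * t powr (2*\<beta>)} r)) \<in> borel_measurable lborel" for r
    proof -
      have e: "(\<lambda>t. indicator {t powr (2*\<beta>)..2 * t powr (2*\<beta>)} r) = (\<lambda>t::real. if t powr (2*\<beta>) \<le> r \<and> r \<le> 2 * t powr (2*\<beta>) then 1 else (0::real))"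
        by (auto simp: indicator_def fun_eq_iff)
      have m1: "(\<lambda>t::real. if t powr (2*\<beta>) \<le> r \<and> r \<le> 2 * t powr (2*\<beta>) then 1 else (0::real)) \<in> borel_measurable lborel"
        by measurable
      show ?thesis using m1 unfolding e[symmetric] by measurable
    qed
    have step4: "(\<integral>\<^sup>+ t. H t r \<partial>lborel) \<le> ennreal (f' r) * ennreal L" for r
    proof -
      have "(\<integral>\<^sup>+ t. H t r \<partial>lborel) = (\<integral>\<^sup>+ t. ennreal (f' r) * (ennreal (indicator {0<..} t * (1/(\<delta>\<^sup>2*t))) * ennreal (indicator {t powr (2*\<beta>)..2 * t powr (2*\<beta>)} r)) \<partial>lborel)"
        unfolding H_def by (intro nn_integral_cong) (rule mult.commute)
      also have "\<dots> = ennreal (f' r) * (\<integral>\<^sup>+ t. ennreal (indicator {0<..} t * (1/(\<delta>\<^sup>2*t))) * ennreal (indicator {t powr (2*\<beta>)..2 * t powr (2*\<beta>)} r) \<partial>lborel)"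
        by (rule nn_integral_cmult[OF Qm])
      also have "\<dots> \<le> ennreal (f' r) * ennreal L"
      proof (cases "r \<ge> 0")
        case True
        show ?thesis unfolding L_def by (rule mult_left_mono[OF Qint[OF \<beta>(1) \<delta> True]]) simp
      next
        case False
        then show ?thesis by (simp add: f'_def)
      qed
      finally show ?thesis .
    qed
    have "(\<integral>\<^sup>+ t\<in>{0<..}. ennreal (LHS t) \<partial>lborel) \<le> (\<integral>\<^sup>+ t. (\<integral>\<^sup>+ r. H t r \<partial>lborel) \<partial>lborel)"
      by (rule nn_integral_mono) (rule step1)
    also have "\<dots> = (\<integral>\<^sup>+ r. (\<integral>\<^sup>+ t. H t r \<partial>lborel) \<partial>lborel)"
      by (rule lborel_pair.Fubini'[OF Hm, symmetric])
    also have "\<dots> \<le> (\<integral>\<^sup>+ r. ennreal (f' r) * ennreal L \<partial>lborel)"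
      by (rule nn_integral_mono) (rule step4)
    also have "\<dots> = F * ennreal L" unfolding Feq by (rule nn_integral_multc) (use f'm in measurable)
    finally have main: "(\<integral>\<^sup>+ t\<in>{0<..}. ennreal (LHS t) \<partial>lborel) \<le> F * ennreal L" .
    have sq: "ennreal ((norm x)\<^sup>2) \<le> ennreal (K\<^sup>2) * (\<integral>\<^sup>+ t\<in>{0<..}. ennreal (LHS t) \<partial>lborel)"
      using sqfun unfolding LHS_def by blast
    have "ennreal (m\<^sup>2 * (norm x)\<^sup>2) = ennreal (m\<^sup>2) * ennreal ((norm x)\<^sup>2)" by (simp add: ennreal_mult)
    also have "\<dots> \<le> ennreal (m\<^sup>2) * (ennreal (K\<^sup>2) * (F * ennreal L))"
    proof -
      have "ennreal ((norm x)\<^sup>2) \<le> ennreal (K\<^sup>2) * (F * ennreal L)"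
        by (rule order_trans[OF sq mult_left_mono[OF main]]) simp
      then show ?thesis by (rule mult_left_mono) simp
    qed
    also have "\<dots> = ennreal (m\<^sup>2 * (K\<^sup>2 * L)) * F"
    proof -
      have e: "ennreal (m\<^sup>2 * (K\<^sup>2 * L)) = ennreal (m\<^sup>2) * (ennreal (K\<^sup>2) * ennreal L)"
        using L by (simp add: ennreal_mult)
      show ?thesis unfolding e by (simp only: ac_simps)
    qed
    also have "\<dots> = F" using m2 by simp
    finally show "ennreal (m\<^sup>2 * (norm x)\<^sup>2) \<le> (\<integral>\<^sup>+ t\<in>{0..}. ennreal ((norm (C (blinfun_apply (T t) x)))\<^sup>2) \<partial>lborel)"
      unfolding F_def .
  qed
qed

end
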